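(* (i) Let $\psi:\mathbb{Q}_p^n\to\mathbb{C}$ be a negative definite function such that, for every $j\in\mathbb{N}=\{0,1,2,\dots\}$, the function $\xi\mapsto[\psi(\xi)]^j$ is also negative definite. Then $\xi\mapsto e^{\psi(\xi)}$ is negative definite. (ii) Let $c_j\ge 0$ and $\alpha_j\in\mathbb{N}$ ($j\ge1$) be such that the real series $\sum_{j=1}^\infty c_j y^{\alpha_j}$ converges for all $y\ge 0$ and defines a non-constant function, and set $\psi_0(\xi):=\sum_{j=1}^\infty c_j\|\xi\|_p^{\alpha_j}$ for $\xi\in\mathbb{Q}_p^n$. Then for every integer $k\ge1$ the $k$-fold iterated exponential $$\xi\mapsto \underbrace{\exp(\exp(\cdots\exp}_{k\text{ times}}(\psi_0(\xi))\cdots))$$ is a continuous negative definite function on $\mathbb{Q}_p^n$.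
   Context: $p$ is a prime, $\mathbb{Q}_p$ the field of $p$-adic numbers with absolute value $|\cdot|_p$, and for $x=(x_1,\dots,x_n)\in\mathbb{Q}_p^n$, $\|x\|_p:=\max_i|x_i|_p$. A function $\psi:\mathbb{Q}_p^n\to\mathbb{C}$ is negative definite if for all $m\ge1$, all $x_1,\dots,x_m\in\mathbb{Q}_p^n$ and all $\lambda_1,\dots,\lambda_m\in\mathbb{C}$, $\sum_{i=1}^m\sum_{j=1}^m\big(\psi(x_i)+\overline{\psi(x_j)}-\psi(x_i-x_j)\big)\lambda_i\overline{\lambda_j}\ge0.$ *)

theory Defs
  imports "HOL-Analysis.Analysis" "HOL-Computational_Algebra.Primes" "HOL-Library.Complex_Order"
begin

definition padic_abs_rat :: "nat \<Rightarrow> rat \<Rightarrow> real" where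
  "padic_abs_rat p q =
     (if q = 0 then 0
      else (let (a, b) = quotient_of q in
            real p powr (real (multiplicity (int p) b) - real (multiplicity (int p) a))))"

definition padic_cauchy :: "nat \<Rightarrow> (nat \<Rightarrow> rat) \<Rightarrow> bool" where
  "padic_cauchy p f \<longleftrightarrow>
     (\<forall>e>0. \<exists>N. \<forall>m\<ge>N. \<forall>k\<ge>N. padic_abs_rat p (f m - f k) < e)"

definition padic_equiv :: "nat \<Rightarrow> (nat \<Rightarrow> rat) \<Rightarrow> (nat \<Rightarrow> rat) \<Rightarrow> bool" where
  "padic_equiv p f g \<longleftrightarrow> (\<lambda>k. padic_abs_rat p (f k - g k)) \<longlonglongrightarrow> 0"

text \<open>An element of Q_p is an equivalence class of p-adic Cauchy sequences of rationals.\<close>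
type_synonym qp = "(nat \<Rightarrow> rat) set"

definition qp_class :: "nat \<Rightarrow> (nat \<Rightarrow> rat) \<Rightarrow> qp" where
  "qp_class p f = {g. padic_cauchy p g \<and> padic_equiv p f g}"

definition Qp :: "nat \<Rightarrow> qp set" where
  "Qp p = {qp_class p f | f. padic_cauchy p f}"

definition qp_rep :: "qp \<Rightarrow> (nat \<Rightarrow> rat)" where
  "qp_rep x = (SOME f. f \<in> x)"

definition qp_sub :: "nat \<Rightarrow> qp \<Rightarrow> qp \<Rightarrow> qp" where
  "qp_sub p x y = qp_class p (\<lambda>k. qp_rep x k - qp_rep y k)"

definition qp_abs :: "nat \<Rightarrow> qp \<Rightarrow> real" where
  "qp_abs p x = lim (\<lambda>k. padic_abs_rat p (qp_rep x k))"

definition Qpn :: "nat \<Rightarrow> ('n::finite \<Rightarrow> qp) set" where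
  "Qpn p = {x. \<forall>i. x i \<in> Qp p}"

definition qpn_sub :: "nat \<Rightarrow> ('n::finite \<Rightarrow> qp) \<Rightarrow> ('n \<Rightarrow> qp) \<Rightarrow> ('n \<Rightarrow> qp)" where
  "qpn_sub p x y = (\<lambda>i. qp_sub p (x i) (y i))"

definition qpn_norm :: "nat \<Rightarrow> ('n::finite \<Rightarrow> qp) \<Rightarrow> real" where
  "qpn_norm p x = Max (range (\<lambda>i. qp_abs p (x i)))"

definition negdef :: "nat \<Rightarrow> (('n::finite \<Rightarrow> qp) \<Rightarrow> complex) \<Rightarrow> bool" where
  "negdef p \<psi> \<longleftrightarrow>
     (\<forall>m::nat. m \<ge> 1 \<longrightarrow> (\<forall>(x::nat \<Rightarrow> ('n \<Rightarrow> qp)) (l::nat \<Rightarrow> complex).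
        (\<forall>i<m. x i \<in> Qpn p) \<longrightarrow>
        0 \<le> (\<Sum>i<m. \<Sum>j<m.
               (\<psi> (x i) + cnj (\<psi> (x j)) - \<psi> (qpn_sub p (x i) (x j))) * l i * cnj (l j))))"

definition qpn_continuous :: "nat \<Rightarrow> (('n::finite \<Rightarrow> qp) \<Rightarrow> complex) \<Rightarrow> bool" where
  "qpn_continuous p F \<longleftrightarrow>
     (\<forall>x\<in>Qpn p. \<forall>e>0. \<exists>d>0. \<forall>y\<in>Qpn p.
        qpn_norm p (qpn_sub p y x) < d \<longrightarrow> cmod (F y - F x) < e)"

end

theory Submission
  imports Defs
begin


lemma mult_neg_int: "multiplicity (q::int) (- a) = multiplicity q a"
proof -
  have "multiplicity q (-a) = multiplicity q (normalize (-a))" by (simp only: multiplicity_normalize_right)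
  also have "normalize (-a) = normalize a" by simp
  also have "multiplicity q (normalize a) = multiplicity q a" by (simp only: multiplicity_normalize_right)
  finally show ?thesis .
qed

lemma pa_repr:
  assumes "prime p" "a \<noteq> 0" "b \<noteq> 0" "q = of_int a / of_int b"
  shows "padic_abs_rat p q = real p powr (real (multiplicity (int p) b) - real (multiplicity (int p) a))"
proof -
  obtain a0 b0 where qo: "quotient_of q = (a0, b0)" by (cases "quotient_of q")
  have qe: "q = of_int a0 / of_int b0" and b0: "b0 > 0" using qo quotient_of_div quotient_of_denom_pos by blast+
  have q0: "q \<noteq> 0" using assms by simp
  have a0: "a0 \<noteq> 0" using qe q0 by auto
  have "of_int a / of_int b = (of_int a0 / of_int b0 :: rat)" using qe assms by simp
  hence "of_int (a * b0) = (of_int (a0 * b) :: rat)" using assms b0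
    by (simp add: field_simps)
  hence eq: "a * b0 = a0 * b" by (simp only: of_int_eq_iff)
  have pe: "prime_elem (int p)" using assms(1) by simp
  have "multiplicity (int p) (a * b0) = multiplicity (int p) (a0 * b)" using eq by simp
  hence "multiplicity (int p) a + multiplicity (int p) b0 = multiplicity (int p) a0 + multiplicity (int p) b"
    using pe assms b0 a0 by (simp add: prime_elem_multiplicity_mult_distrib)
  hence "real (multiplicity (int p) b) - real (multiplicity (int p) a) = real (multiplicity (int p) b0) - real (multiplicity (int p) a0)"
    by linarith
  thus ?thesis using q0 qo by (simp add: padic_abs_rat_def)
qed

lemma pa_nonneg: "padic_abs_rat p q \<ge> 0"
  by (auto simp: padic_abs_rat_def split: prod.splits)

lemma pa_zero[simp]: "padic_abs_rat p 0 = 0"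
  by (simp add: padic_abs_rat_def)

lemma pa_obtain:
  fixes q :: rat
  assumes "q \<noteq> 0"
  obtains a b where "a \<noteq> 0" "b \<noteq> 0" "q = of_int a / of_int b"
proof -
  obtain a0 b0 where qo: "quotient_of q = (a0, b0)" by (cases "quotient_of q")
  have qe: "q = of_int a0 / of_int b0" and b0: "b0 > 0" using qo quotient_of_div quotient_of_denom_pos by blast+
  have "a0 \<noteq> 0" using qe assms by auto
  moreover have "b0 \<noteq> 0" using b0 by simp
  ultimately show ?thesis using that[of a0 b0] qe by blast
qed

lemma pa_uminus: assumes "prime p" shows "padic_abs_rat p (- q) = padic_abs_rat p q"
proof (cases "q = 0")
  case False
  then obtain a b where ab: "a \<noteq> 0" "b \<noteq> 0" "q = of_int a / of_int b" by (rule pa_obtain)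
  have "- q = of_int (-a) / of_int b" using ab by simp
  thus ?thesis using pa_repr[OF assms ab] pa_repr[OF assms, of "-a" b "-q"] ab by (simp add: mult_neg_int)
qed simp

lemma pa_ultra:
  assumes "prime p"
  shows "padic_abs_rat p (q1 + q2) \<le> max (padic_abs_rat p q1) (padic_abs_rat p q2)"
proof (cases "q1 = 0 \<or> q2 = 0 \<or> q1 + q2 = 0")
  case True
  thus ?thesis using pa_nonneg[of p q1] pa_nonneg[of p q2] pa_nonneg[of p "q1+q2"]
    by (auto simp: le_max_iff_disj)
next
  case False
  then obtain a b c d where ab: "a \<noteq> 0" "b \<noteq> 0" "q1 = of_int a / of_int b"
    and cd: "c \<noteq> 0" "d \<noteq> 0" "q2 = of_int c / of_int d" by (meson pa_obtain)
  have se: "q1 + q2 = of_int (a*d + c*b) / of_int (b*d)" using ab cd by (simp add: field_simps)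
  have s0: "a*d + c*b \<noteq> 0"
  proof
    assume "a*d + c*b = 0"
    hence "of_int (a*d + c*b) = (0::rat)" by simp
    thus False using False se by simp
  qed
  have pe: "prime_elem (int p)" using assms by simp
  define m where "m = multiplicity (int p)"
  define k where "k = min (m a + m d) (m c + m b)"
  have "int p ^ k dvd a * d"
    by (rule multiplicity_dvd') (use ab cd pe in \<open>simp add: m_def k_def prime_elem_multiplicity_mult_distrib\<close>)
  moreover have "int p ^ k dvd c * b"
    by (rule multiplicity_dvd') (use ab cd pe in \<open>simp add: m_def k_def prime_elem_multiplicity_mult_distrib\<close>)
  ultimately have "int p ^ k dvd a*d + c*b" by simp
  hence kle: "k \<le> m (a*d + c*b)" unfolding m_def
    using multiplicity_geI s0 pe by (metis not_prime_elem_zero prime_elem_def)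
  have e1: "padic_abs_rat p (q1 + q2) = real p powr (real (m (b*d)) - real (m (a*d+c*b)))"
    using pa_repr[OF assms s0 _ se] ab cd by (simp add: m_def)
  have "m (b*d) = m b + m d" using ab cd pe by (simp add: m_def prime_elem_multiplicity_mult_distrib)
  hence "real (m (b*d)) - real (m (a*d+c*b)) \<le> max (real (m b) - real (m a)) (real (m d) - real (m c))"
    using kle unfolding k_def by linarith
  moreover have "real p > 1" using assms prime_gt_1_nat by auto
  ultimately have "padic_abs_rat p (q1 + q2) \<le> real p powr max (real (m b) - real (m a)) (real (m d) - real (m c))"
    using e1 by simp
  also have "\<dots> = max (padic_abs_rat p q1) (padic_abs_rat p q2)"
    using pa_repr[OF assms ab] pa_repr[OF assms cd] \<open>real p > 1\<close>
    by (simp add: m_def max_def)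
  finally show ?thesis .
qed



context fixes p :: nat assumes pr: "prime p" begin

lemma pa_sub_sym: "padic_abs_rat p (a - b) = padic_abs_rat p (b - a)"
  using pa_uminus[OF pr, of "a - b"] by simp

lemma pa_tri: "padic_abs_rat p (a - c) \<le> max (padic_abs_rat p (a - b)) (padic_abs_rat p (b - c))"
  using pa_ultra[OF pr, of "a - b" "b - c"] by simp

lemma pa_sub_le: "padic_abs_rat p (a - b) \<le> max (padic_abs_rat p a) (padic_abs_rat p b)"
  using pa_ultra[OF pr, of a "- b"] pa_uminus[OF pr, of b] by simp

lemma pa_le_sub: "padic_abs_rat p a \<le> max (padic_abs_rat p (a - b)) (padic_abs_rat p b)"
  using pa_ultra[OF pr, of "a - b" b] by simp

lemma pa_rev: "\<bar>padic_abs_rat p a - padic_abs_rat p b\<bar> \<le> padic_abs_rat p (a - b)"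
proof -
  have 1: "padic_abs_rat p a \<le> max (padic_abs_rat p (a - b)) (padic_abs_rat p b)" by (rule pa_le_sub)
  have 2: "padic_abs_rat p b \<le> max (padic_abs_rat p (a - b)) (padic_abs_rat p a)"
    using pa_le_sub[of b a] pa_sub_sym[of b a] by simp
  show ?thesis using 1 2 pa_nonneg[of p a] pa_nonneg[of p b] pa_nonneg[of p "a-b"]
    by (auto simp: max_def abs_if split: if_splits)
qed

lemma cauchy_diff:
  assumes "padic_cauchy p f" "padic_cauchy p g"
  shows "padic_cauchy p (\<lambda>k. f k - g k)"
  unfolding padic_cauchy_def
proof (intro allI impI)
  fix e :: real assume e: "e > 0"
  obtain N1 where N1: "\<forall>m\<ge>N1. \<forall>k\<ge>N1. padic_abs_rat p (f m - f k) < e"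
    using assms(1) e unfolding padic_cauchy_def by blast
  obtain N2 where N2: "\<forall>m\<ge>N2. \<forall>k\<ge>N2. padic_abs_rat p (g m - g k) < e"
    using assms(2) e unfolding padic_cauchy_def by blast
  show "\<exists>N. \<forall>m\<ge>N. \<forall>k\<ge>N. padic_abs_rat p (f m - g m - (f k - g k)) < e"
  proof (intro exI[of _ "max N1 N2"] allI impI)
    fix m k assume "m \<ge> max N1 N2" "k \<ge> max N1 N2"
    hence a: "padic_abs_rat p (f m - f k) < e" "padic_abs_rat p (g m - g k) < e" using N1 N2 by auto
    have eqd: "f m - g m - (f k - g k) = (f m - f k) - (g m - g k)" by simp
    have "padic_abs_rat p (f m - g m - (f k - g k)) \<le> max (padic_abs_rat p (f m - f k)) (padic_abs_rat p (g m - g k))"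
      unfolding eqd by (rule pa_sub_le)
    thus "padic_abs_rat p (f m - g m - (f k - g k)) < e" using a by simp
  qed
qed

lemma cauchy_conv:
  assumes "padic_cauchy p f"
  shows "convergent (\<lambda>k. padic_abs_rat p (f k))"
proof -
  have "Cauchy (\<lambda>k. padic_abs_rat p (f k))"
    unfolding Cauchy_iff
  proof (intro allI impI)
    fix e :: real assume e: "e > 0"
    obtain N where N: "\<forall>m\<ge>N. \<forall>k\<ge>N. padic_abs_rat p (f m - f k) < e"
      using assms e unfolding padic_cauchy_def by blast
    show "\<exists>M. \<forall>m\<ge>M. \<forall>n\<ge>M. norm (padic_abs_rat p (f m) - padic_abs_rat p (f n)) < e"
      using N pa_rev by (metis order.strict_trans1 real_norm_def)
  qed
  thus ?thesis by (simp add: Cauchy_convergent_iff)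
qed

lemma equiv_lim:
  assumes "padic_cauchy p f" "padic_equiv p f g"
  shows "(\<lambda>k. padic_abs_rat p (g k)) \<longlonglongrightarrow> lim (\<lambda>k. padic_abs_rat p (f k))"
proof -
  have lf: "(\<lambda>k. padic_abs_rat p (f k)) \<longlonglongrightarrow> lim (\<lambda>k. padic_abs_rat p (f k))"
    using cauchy_conv[OF assms(1)] by (simp add: convergent_LIMSEQ_iff)
  have d0: "(\<lambda>k. padic_abs_rat p (f k - g k)) \<longlonglongrightarrow> 0" using assms(2) by (simp add: padic_equiv_def)
  have "(\<lambda>k. padic_abs_rat p (f k) - padic_abs_rat p (g k)) \<longlonglongrightarrow> 0"
    by (rule Lim_null_comparison[OF _ d0]) (use pa_rev in auto)
  from tendsto_diff[OF lf this] show ?thesis by simp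
qed

lemma rep_in:
  assumes "x \<in> Qp p"
  shows "qp_rep x \<in> x" "padic_cauchy p (qp_rep x)"
proof -
  obtain f where f: "padic_cauchy p f" "x = qp_class p f" using assms by (auto simp: Qp_def)
  have "f \<in> x" using f by (simp add: qp_class_def padic_equiv_def)
  thus "qp_rep x \<in> x" unfolding qp_rep_def by (rule someI[of "\<lambda>f. f \<in> x"])
  thus "padic_cauchy p (qp_rep x)" using f by (simp add: qp_class_def)
qed

lemma class_rep:
  assumes "padic_cauchy p f"
  shows "padic_cauchy p (qp_rep (qp_class p f))" "padic_equiv p f (qp_rep (qp_class p f))"
proof -
  have "f \<in> qp_class p f" using assms by (simp add: qp_class_def padic_equiv_def)
  hence "qp_rep (qp_class p f) \<in> qp_class p f" unfolding qp_rep_def by (rule someI[of "\<lambda>g. g \<in> qp_class p f"])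
  thus "padic_cauchy p (qp_rep (qp_class p f))" "padic_equiv p f (qp_rep (qp_class p f))"
    by (simp_all add: qp_class_def)
qed

lemma A1:
  assumes "x \<in> Qp p"
  shows "(\<lambda>k. padic_abs_rat p (qp_rep x k)) \<longlonglongrightarrow> qp_abs p x"
  using cauchy_conv[OF rep_in(2)[OF assms]] by (simp add: qp_abs_def convergent_LIMSEQ_iff)

lemma A2:
  assumes "x \<in> Qp p" "y \<in> Qp p"
  shows "(\<lambda>k. padic_abs_rat p (qp_rep x k - qp_rep y k)) \<longlonglongrightarrow> qp_abs p (qp_sub p x y)"
proof -
  define D where "D = (\<lambda>k. qp_rep x k - qp_rep y k)"
  have cD: "padic_cauchy p D" unfolding D_def by (rule cauchy_diff; rule rep_in; fact)
  have c: "padic_cauchy p (qp_rep (qp_class p D))" and e: "padic_equiv p D (qp_rep (qp_class p D))"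
    using class_rep[OF cD] by auto
  have eq': "padic_equiv p (qp_rep (qp_class p D)) D"
    using e unfolding padic_equiv_def using pa_sub_sym by simp
  have "(\<lambda>k. padic_abs_rat p (D k)) \<longlonglongrightarrow> lim (\<lambda>k. padic_abs_rat p (qp_rep (qp_class p D) k))"
    by (rule equiv_lim[OF c eq'])
  thus ?thesis by (simp add: qp_abs_def qp_sub_def D_def)
qed

lemma qp_abs_nonneg: "x \<in> Qp p \<Longrightarrow> qp_abs p x \<ge> 0"
  by (rule LIMSEQ_le_const[OF A1]) (auto simp: pa_nonneg)

lemma qp_sub_abs_nonneg: "x \<in> Qp p \<Longrightarrow> y \<in> Qp p \<Longrightarrow> qp_abs p (qp_sub p x y) \<ge> 0"
  by (rule LIMSEQ_le_const[OF A2]) (auto simp: pa_nonneg)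

lemma lim_max_le:
  fixes a b c :: "nat \<Rightarrow> real"
  assumes "a \<longlonglongrightarrow> A" "b \<longlonglongrightarrow> B" "c \<longlonglongrightarrow> C" "\<And>k. a k \<le> max (b k) (c k)"
  shows "A \<le> max B C"
  using assms(1) tendsto_max[OF assms(2,3)] by (rule LIMSEQ_le) (use assms(4) in auto)

lemma Q_self: "x \<in> Qp p \<Longrightarrow> qp_abs p (qp_sub p x x) = 0"
  using A2[of x x] by (simp add: LIMSEQ_unique)

lemma Q_sym: "x \<in> Qp p \<Longrightarrow> y \<in> Qp p \<Longrightarrow> qp_abs p (qp_sub p x y) = qp_abs p (qp_sub p y x)"
  using A2[of x y] A2[of y x] pa_sub_sym by (metis (no_types, lifting) LIMSEQ_unique ext)

lemma Q_tri: "x \<in> Qp p \<Longrightarrow> y \<in> Qp p \<Longrightarrow> z \<in> Qp p \<Longrightarrow>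
   qp_abs p (qp_sub p x z) \<le> max (qp_abs p (qp_sub p x y)) (qp_abs p (qp_sub p y z))"
  by (rule lim_max_le[OF A2 A2 A2]) (auto intro: pa_tri)

lemma Q_sub_le: "x \<in> Qp p \<Longrightarrow> y \<in> Qp p \<Longrightarrow>
   qp_abs p (qp_sub p x y) \<le> max (qp_abs p x) (qp_abs p y)"
  by (rule lim_max_le[OF A2 A1 A1]) (auto intro: pa_sub_le)

lemma Q_le_sub: "x \<in> Qp p \<Longrightarrow> y \<in> Qp p \<Longrightarrow>
   qp_abs p x \<le> max (qp_abs p (qp_sub p x y)) (qp_abs p y)"
  by (rule lim_max_le[OF A1 A2 A1]) (auto intro: pa_le_sub)

end


lemma max_range_le:
  fixes A B C :: "'n::finite \<Rightarrow> real"
  assumes "\<And>i. A i \<le> max (B i) (C i)"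
  shows "Max (range A) \<le> max (Max (range B)) (Max (range C))"
proof -
  have "\<forall>i. A i \<le> max (Max (range B)) (Max (range C))"
  proof
    fix i
    have "B i \<le> Max (range B)" "C i \<le> Max (range C)" by (auto intro: Max_ge)
    thus "A i \<le> max (Max (range B)) (Max (range C))" using assms[of i] by linarith
  qed
  thus ?thesis by (subst Max_le_iff) auto
qed

context fixes p :: nat assumes pr: "prime p" begin

lemma N_nonneg: assumes "(x :: 'n::finite \<Rightarrow> qp) \<in> Qpn p" shows "qpn_norm p x \<ge> 0"
proof -
  have 1: "0 \<le> qp_abs p (x undefined)" using qp_abs_nonneg[OF pr, of "x undefined"] assms by (simp add: Qpn_def)
  have 2: "qp_abs p (x undefined) \<le> qpn_norm p x" unfolding qpn_norm_def by (rule Max_ge) auto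
  show ?thesis using 1 2 by linarith
qed

lemma N_sub_nonneg: assumes "(x :: 'n::finite \<Rightarrow> qp) \<in> Qpn p" "y \<in> Qpn p" shows "qpn_norm p (qpn_sub p x y) \<ge> 0"
proof -
  have 1: "0 \<le> qp_abs p (qp_sub p (x undefined) (y undefined))"
    using qp_sub_abs_nonneg[OF pr, of "x undefined" "y undefined"] assms by (simp add: Qpn_def)
  have 2: "qp_abs p (qp_sub p (x undefined) (y undefined)) \<le> qpn_norm p (qpn_sub p x y)"
    unfolding qpn_norm_def qpn_sub_def by (rule Max_ge) auto
  show ?thesis using 1 2 by linarith
qed

lemma N_self: "(x :: 'n::finite \<Rightarrow> qp) \<in> Qpn p \<Longrightarrow> qpn_norm p (qpn_sub p x x) = 0"
  unfolding qpn_norm_def Qpn_def qpn_sub_def using Q_self[OF pr] by simp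

lemma N_sym: "(x :: 'n::finite \<Rightarrow> qp) \<in> Qpn p \<Longrightarrow> y \<in> Qpn p \<Longrightarrow>
  qpn_norm p (qpn_sub p x y) = qpn_norm p (qpn_sub p y x)"
  unfolding qpn_norm_def Qpn_def qpn_sub_def using Q_sym[OF pr] by simp

lemma N_tri: "(x :: 'n::finite \<Rightarrow> qp) \<in> Qpn p \<Longrightarrow> y \<in> Qpn p \<Longrightarrow> z \<in> Qpn p \<Longrightarrow>
  qpn_norm p (qpn_sub p x z) \<le> max (qpn_norm p (qpn_sub p x y)) (qpn_norm p (qpn_sub p y z))"
  unfolding qpn_norm_def Qpn_def qpn_sub_def by (rule max_range_le) (use Q_tri[OF pr] in auto)

lemma N_sub_le: "(x :: 'n::finite \<Rightarrow> qp) \<in> Qpn p \<Longrightarrow> y \<in> Qpn p \<Longrightarrow>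
  qpn_norm p (qpn_sub p x y) \<le> max (qpn_norm p x) (qpn_norm p y)"
  unfolding qpn_norm_def Qpn_def qpn_sub_def by (rule max_range_le) (use Q_sub_le[OF pr] in auto)

lemma N_le_sub: "(x :: 'n::finite \<Rightarrow> qp) \<in> Qpn p \<Longrightarrow> y \<in> Qpn p \<Longrightarrow>
  qpn_norm p x \<le> max (qpn_norm p (qpn_sub p x y)) (qpn_norm p y)"
  unfolding qpn_norm_def Qpn_def qpn_sub_def by (rule max_range_le) (use Q_le_sub[OF pr] in auto)

lemma N_lip: "(x :: 'n::finite \<Rightarrow> qp) \<in> Qpn p \<Longrightarrow> y \<in> Qpn p \<Longrightarrow>
  \<bar>qpn_norm p y - qpn_norm p x\<bar> \<le> qpn_norm p (qpn_sub p y x)"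
  using N_le_sub[of y x] N_le_sub[of x y] N_sym[of x y] N_nonneg[of x] N_nonneg[of y] N_sub_nonneg[of y x]
  by (auto simp: max_def abs_if split: if_splits)

end


lemma cnj_sq_nonneg: "0 \<le> z * cnj (z::complex)"
  by (simp add: complex_mult_cnj less_eq_complex_def)

lemma class_psd:
  fixes c :: "nat \<Rightarrow> nat" and \<mu> :: "nat \<Rightarrow> complex"
  assumes "\<forall>i<m. c i < m"
  shows "0 \<le> (\<Sum>i<m. \<Sum>j<m. (if c i = c j then 1 else 0) * \<mu> i * cnj (\<mu> j))"
proof -
  define f where "f k i = (if c i = k then \<mu> i else 0)" for k i
  have "(\<Sum>i<m. \<Sum>j<m. (if c i = c j then 1 else 0) * \<mu> i * cnj (\<mu> j))
      = (\<Sum>i<m. \<Sum>j<m. \<Sum>k<m. f k i * cnj (f k j))"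
  proof (intro sum.cong refl)
    fix i j assume "i \<in> {..<m}" "j \<in> {..<m}"
    hence ci: "c i < m" using assms by auto
    have "(\<Sum>k<m. f k i * cnj (f k j)) = (\<Sum>k<m. if k = c i then (if c j = c i then \<mu> i * cnj (\<mu> j) else 0) else 0)"
      by (rule sum.cong) (auto simp: f_def)
    also have "\<dots> = (if c j = c i then \<mu> i * cnj (\<mu> j) else 0)" using ci by (simp add: sum.delta')
    finally show "(if c i = c j then 1 else 0) * \<mu> i * cnj (\<mu> j) = (\<Sum>k<m. f k i * cnj (f k j))"
      by auto
  qed
  also have "\<dots> = (\<Sum>i<m. \<Sum>k<m. \<Sum>j<m. f k i * cnj (f k j))"
    by (rule sum.cong[OF refl], rule sum.swap)
  also have "\<dots> = (\<Sum>k<m. \<Sum>i<m. \<Sum>j<m. f k i * cnj (f k j))"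
    by (rule sum.swap)
  also have "\<dots> = (\<Sum>k<m. (\<Sum>i<m. f k i) * cnj (\<Sum>j<m. f k j))"
    by (simp add: sum_product cnj_sum)
  also have "0 \<le> \<dots>" by (intro sum_nonneg cnj_sq_nonneg)
  finally show ?thesis by simp
qed


lemma eqv_psd:
  fixes \<mu> :: "nat \<Rightarrow> complex"
  assumes refl: "\<forall>i<m. E i i" and sym: "\<forall>i<m. \<forall>j<m. E i j \<longrightarrow> E j i"
    and trans: "\<forall>i<m. \<forall>j<m. \<forall>k<m. E i j \<longrightarrow> E j k \<longrightarrow> E i k"
  shows "0 \<le> (\<Sum>i<m. \<Sum>j<m. (if E i j then 1 else 0) * \<mu> i * cnj (\<mu> j))"
proof -
  define c where "c i = (LEAST j. E i j)" for i
  have cle: "c i \<le> i" and cE: "E i (c i)" if "i < m" for i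
    using refl that unfolding c_def by (auto intro: Least_le LeastI)
  have cm: "\<forall>i<m. c i < m" using cle by (meson le_less_trans)
  have iff: "E i j \<longleftrightarrow> c i = c j" if "i < m" "j < m" for i j
  proof
    assume e: "E i j"
    have "E j (c i)" using trans sym e cE[OF that(1)] cm that by meson
    hence 1: "c j \<le> c i" unfolding c_def by (rule Least_le)
    have "E i (c j)" using trans sym e cE[OF that(2)] cm that by meson
    hence 2: "c i \<le> c j" unfolding c_def by (rule Least_le)
    show "c i = c j" using 1 2 by simp
  next
    assume "c i = c j"
    thus "E i j" using trans sym cE[OF that(1)] cE[OF that(2)] cm that by metis
  qed
  have "(\<Sum>i<m. \<Sum>j<m. (if E i j then 1 else 0) * \<mu> i * cnj (\<mu> j))
     = (\<Sum>i<m. \<Sum>j<m. (if c i = c j then 1 else 0) * \<mu> i * cnj (\<mu> j))"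
    by (rule sum.cong[OF HOL.refl], rule sum.cong[OF HOL.refl]) (simp add: iff)
  also have "0 \<le> \<dots>" by (rule class_psd[OF cm])
  finally show ?thesis by simp
qed



lemma of_real_nonneg_complex: "x \<ge> 0 \<Longrightarrow> 0 \<le> complex_of_real x"
  by (simp add: less_eq_complex_def)

lemma key:
  fixes a :: "nat \<Rightarrow> real" and d :: "nat \<Rightarrow> nat \<Rightarrow> real" and l :: "nat \<Rightarrow> complex"
  assumes T: "T = insert 0 (a ` {..<m} \<union> (\<lambda>(i,j). d i j) ` ({..<m} \<times> {..<m}))"
  and nonneg: "\<forall>t\<in>T. t \<ge> 0"
  and dd: "\<forall>i<m. d i i = 0"
  and dsym: "\<forall>i<m. \<forall>j<m. d i j = d j i"
  and dtri: "\<forall>i<m. \<forall>j<m. \<forall>k<m. d i k \<le> max (d i j) (d j k)"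
  and dle: "\<forall>i<m. \<forall>j<m. d i j \<le> max (a i) (a j)"
  and ale: "\<forall>i<m. \<forall>j<m. a i \<le> max (d i j) (a j)"
  shows "\<forall>h. card (h ` T) \<le> n \<longrightarrow> (\<forall>s\<in>T. \<forall>t\<in>T. s \<le> t \<longrightarrow> h s \<le> h t) \<longrightarrow> h 0 \<ge> 0 \<longrightarrow>
     0 \<le> (\<Sum>i<m. \<Sum>j<m. complex_of_real (h (a i) + h (a j) - h (d i j)) * l i * cnj (l j))"
proof (induction n)
  have finT: "finite T" using T by simp
  have aT: "\<And>i. i < m \<Longrightarrow> a i \<in> T" using T by auto
  have dT: "\<And>i j. i < m \<Longrightarrow> j < m \<Longrightarrow> d i j \<in> T" using T by force
  have zT: "0 \<in> T" using T by simp
  case 0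
  show ?case using finT zT by auto
next
  have finT: "finite T" using T by simp
  have aT: "\<And>i. i < m \<Longrightarrow> a i \<in> T" using T by auto
  have dT: "\<And>i j. i < m \<Longrightarrow> j < m \<Longrightarrow> d i j \<in> T" using T by force
  have zT: "0 \<in> T" using T by simp
  case (Suc n)
  show ?case
  proof (intro allI impI)
    fix h :: "real \<Rightarrow> real"
    assume card: "card (h ` T) \<le> Suc n" and mono: "\<forall>s\<in>T. \<forall>t\<in>T. s \<le> t \<longrightarrow> h s \<le> h t" and h0: "h 0 \<ge> 0"
    have hmax: "h r \<le> max (h s) (h t)" if "r \<in> T" "s \<in> T" "t \<in> T" "r \<le> max s t" for r s t
      using mono that by (cases "s \<le> t") (auto simp: max_def intro: order.trans)
    define v where "v = Max (h ` T)"
    have hv: "\<forall>t\<in>T. h t \<le> v" using finT unfolding v_def by auto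
    have h0le: "\<forall>t\<in>T. h 0 \<le> h t" using mono zT nonneg by auto
    show "0 \<le> (\<Sum>i<m. \<Sum>j<m. complex_of_real (h (a i) + h (a j) - h (d i j)) * l i * cnj (l j))"
    proof (cases "v = h 0")
      case True
      hence hc: "\<forall>t\<in>T. h t = h 0" using hv h0le by (metis order.antisym)
      have "(\<Sum>i<m. \<Sum>j<m. complex_of_real (h (a i) + h (a j) - h (d i j)) * l i * cnj (l j))
          = (\<Sum>i<m. \<Sum>j<m. complex_of_real (h 0) * (l i * cnj (l j)))"
        by (rule sum.cong[OF refl], rule sum.cong[OF refl]) (simp add: hc aT dT)
      also have "\<dots> = complex_of_real (h 0) * (\<Sum>i<m. \<Sum>j<m. l i * cnj (l j))"
        by (simp add: sum_distrib_left)
      also have "\<dots> = complex_of_real (h 0) * ((\<Sum>i<m. l i) * cnj (\<Sum>j<m. l j))"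
        by (simp only: sum_product cnj_sum)
      also have "0 \<le> \<dots>" by (intro mult_nonneg_nonneg of_real_nonneg_complex h0 cnj_sq_nonneg)
      finally show ?thesis by simp
    next
      case False
      have h0T: "h 0 \<in> h ` T - {v}" using zT False by auto
      define u where "u = Max (h ` T - {v})"
      have uin: "u \<in> h ` T - {v}" unfolding u_def using h0T finT by (intro Max_in) auto
      have hu: "\<forall>t\<in>T. h t \<noteq> v \<longrightarrow> h t \<le> u" unfolding u_def using finT by auto
      have uv: "u < v" using uin hv by force
      define h' where "h' t = (if h t = v then u else h t)" for t
      have mono': "\<forall>s\<in>T. \<forall>t\<in>T. s \<le> t \<longrightarrow> h' s \<le> h' t"
      proof (intro ballI impI)
        fix s t assume st: "s \<in> T" "t \<in> T" "s \<le> t"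
        show "h' s \<le> h' t"
        proof (cases "h t = v")
          case True thus ?thesis using hu st by (auto simp: h'_def)
        next
          case False
          have "h s \<le> h t" using mono st by auto
          moreover have "h t \<le> v" using hv st by auto
          ultimately have "h s \<noteq> v" using False by auto
          thus ?thesis using False \<open>h s \<le> h t\<close> by (simp add: h'_def)
        qed
      qed
      have h'0: "h' 0 = h 0" using False by (simp add: h'_def)
      have "h' ` T \<subseteq> h ` T - {v}" using uin uv by (auto simp: h'_def)
      hence "card (h' ` T) \<le> card (h ` T - {v})" using finT by (intro card_mono) auto
      also have "\<dots> = card (h ` T) - 1"
      proof -
        have "v \<in> h ` T" unfolding v_def using finT zT by (intro Max_in) auto
        thus ?thesis using finT by (simp add: card_Diff_singleton)
      qed
      finally have card': "card (h' ` T) \<le> n" using card by linarith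
      have IH: "0 \<le> (\<Sum>i<m. \<Sum>j<m. complex_of_real (h' (a i) + h' (a j) - h' (d i j)) * l i * cnj (l j))"
        using Suc.IH card' mono' h'0 h0 by auto
      define y where "y t = (if h t = v then 1 else 0 :: real)" for t
      define E where "E i j = (h (d i j) \<noteq> v)" for i j
      define \<mu> where "\<mu> i = complex_of_real (y (a i)) * l i" for i
      have c1: "h (d i j) = v" if "i < m" "j < m" "h (a i) = v" "h (a j) \<noteq> v" for i j
      proof -
        have "h (a i) \<le> max (h (d i j)) (h (a j))" using hmax ale that aT dT by auto
        moreover have "h (d i j) \<le> v" "h (a j) \<le> v" using hv that aT dT by auto
        ultimately show ?thesis using that by (auto simp: max_def split: if_splits)
      qed
      have c2: "h (d i j) = v" if "i < m" "j < m" "h (a i) \<noteq> v" "h (a j) = v" for i j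
        using c1[of j i] that dsym by auto
      have c3: "h (d i j) \<noteq> v" if "i < m" "j < m" "h (a i) \<noteq> v" "h (a j) \<noteq> v" for i j
      proof -
        have "h (d i j) \<le> max (h (a i)) (h (a j))" using hmax dle that aT dT by auto
        moreover have "h (a i) \<le> v" "h (a j) \<le> v" using hv that aT by auto
        ultimately show ?thesis using that by (auto simp: max_def split: if_splits)
      qed
      have pw: "complex_of_real (h (a i) + h (a j) - h (d i j)) * l i * cnj (l j)
          = complex_of_real (h' (a i) + h' (a j) - h' (d i j)) * l i * cnj (l j)
            + complex_of_real (v - u) * (\<mu> i * cnj (\<mu> j) + (if E i j then 1 else 0) * \<mu> i * cnj (\<mu> j))"
        if "i < m" "j < m" for i j
      proof -
        have "h (a i) + h (a j) - h (d i j) = (h' (a i) + h' (a j) - h' (d i j))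
             + (v - u) * (y (a i) * y (a j) * (1 + (if E i j then 1 else 0)))"
          using c1[OF that] c2[OF that] c3[OF that]
          by (cases "h (a i) = v"; cases "h (a j) = v"; cases "h (d i j) = v")
             (simp_all add: h'_def y_def E_def algebra_simps)
        hence R: "complex_of_real (h (a i) + h (a j) - h (d i j)) = complex_of_real (h' (a i) + h' (a j) - h' (d i j))
             + complex_of_real (v - u) * (complex_of_real (y (a i)) * complex_of_real (y (a j)) * (1 + (if E i j then 1 else 0)))"
          by (simp only: of_real_add of_real_mult) (simp add: of_real_def)
        show ?thesis unfolding R \<mu>_def by (cases "E i j") (simp_all add: algebra_simps)
      qed
      have "(\<Sum>i<m. \<Sum>j<m. complex_of_real (h (a i) + h (a j) - h (d i j)) * l i * cnj (l j))
          = (\<Sum>i<m. \<Sum>j<m. complex_of_real (h' (a i) + h' (a j) - h' (d i j)) * l i * cnj (l j))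
            + complex_of_real (v - u) * ((\<Sum>i<m. \<mu> i) * cnj (\<Sum>j<m. \<mu> j)
              + (\<Sum>i<m. \<Sum>j<m. (if E i j then 1 else 0) * \<mu> i * cnj (\<mu> j)))"
      proof -
        have "(\<Sum>i<m. \<Sum>j<m. complex_of_real (h (a i) + h (a j) - h (d i j)) * l i * cnj (l j))
          = (\<Sum>i<m. \<Sum>j<m. complex_of_real (h' (a i) + h' (a j) - h' (d i j)) * l i * cnj (l j)
            + complex_of_real (v - u) * (\<mu> i * cnj (\<mu> j) + (if E i j then 1 else 0) * \<mu> i * cnj (\<mu> j)))"
          by (rule sum.cong[OF refl], rule sum.cong[OF refl]) (rule pw; simp)
        also have "\<dots> = (\<Sum>i<m. \<Sum>j<m. complex_of_real (h' (a i) + h' (a j) - h' (d i j)) * l i * cnj (l j))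
            + complex_of_real (v - u) * ((\<Sum>i<m. \<Sum>j<m. \<mu> i * cnj (\<mu> j))
              + (\<Sum>i<m. \<Sum>j<m. (if E i j then 1 else 0) * \<mu> i * cnj (\<mu> j)))"
          by (simp only: sum.distrib sum_distrib_left distrib_left)
        also have "(\<Sum>i<m. \<Sum>j<m. \<mu> i * cnj (\<mu> j)) = (\<Sum>i<m. \<mu> i) * cnj (\<Sum>j<m. \<mu> j)"
          by (simp only: sum_product cnj_sum)
        finally show ?thesis .
      qed
      also have "0 \<le> \<dots>"
      proof (intro add_nonneg_nonneg IH cnj_sq_nonneg eqv_psd mult_nonneg_nonneg of_real_nonneg_complex)
        show "0 \<le> v - u" using uv by simp
        show "\<forall>i<m. E i i" using dd False by (simp add: E_def)
        show "\<forall>i<m. \<forall>j<m. E i j \<longrightarrow> E j i" using dsym by (simp add: E_def)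
        show "\<forall>i<m. \<forall>j<m. \<forall>k<m. E i j \<longrightarrow> E j k \<longrightarrow> E i k"
        proof (intro allI impI)
          fix i j k assume "i < m" "j < m" "k < m" "E i j" "E j k"
          moreover have "h (d i k) \<le> max (h (d i j)) (h (d j k))"
            using hmax dtri \<open>i < m\<close> \<open>j < m\<close> \<open>k < m\<close> dT by auto
          moreover have "h (d i j) \<le> v" "h (d j k) \<le> v" using hv dT \<open>i < m\<close> \<open>j < m\<close> \<open>k < m\<close> by auto
          ultimately show "E i k" by (auto simp: E_def max_def split: if_splits)
        qed
      qed
      finally show ?thesis by simp
    qed
  qed
qed



lemma sums_nonneg_complex:
  fixes f :: "nat \<Rightarrow> complex"
  assumes "f sums s" "\<And>n. 0 \<le> f n"
  shows "0 \<le> s"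
proof -
  have r: "(\<lambda>n. Re (f n)) sums Re s" by (rule bounded_linear.sums[OF bounded_linear_Re assms(1)])
  have i: "(\<lambda>n. Im (f n)) sums Im s" by (rule bounded_linear.sums[OF bounded_linear_Im assms(1)])
  have "\<And>n. Im (f n) = 0" "\<And>n. Re (f n) \<ge> 0" using assms(2) by (auto simp: less_eq_complex_def)
  hence "Im s = 0" "Re s \<ge> 0" using i r sums_unique[OF i] sums_le[of "\<lambda>_. 0" "\<lambda>n. Re (f n)"] by auto
  thus ?thesis by (simp add: less_eq_complex_def)
qed

lemma part1:
  fixes \<psi> :: "('n::finite \<Rightarrow> qp) \<Rightarrow> complex"
  assumes "\<forall>j::nat. negdef p (\<lambda>\<xi>. (\<psi> \<xi>) ^ j)"
  shows "negdef p (\<lambda>\<xi>. exp (\<psi> \<xi>))"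
  unfolding negdef_def
proof (intro allI impI)
  fix m :: nat and x :: "nat \<Rightarrow> ('n \<Rightarrow> qp)" and l :: "nat \<Rightarrow> complex"
  assume m: "1 \<le> m" and x: "\<forall>i<m. x i \<in> Qpn p"
  define Q where "Q j = (\<Sum>i<m. \<Sum>k<m. ((\<psi> (x i))^j + cnj ((\<psi> (x k))^j) - (\<psi> (qpn_sub p (x i) (x k)))^j) * l i * cnj (l k))" for j
  have Qnn: "0 \<le> Q j" for j using assms m x unfolding negdef_def Q_def by blast
  have s: "(\<lambda>j. \<Sum>i<m. \<Sum>k<m. ((\<psi> (x i))^j /\<^sub>R fact j + cnj ((\<psi> (x k))^j /\<^sub>R fact j)
        - (\<psi> (qpn_sub p (x i) (x k)))^j /\<^sub>R fact j) * l i * cnj (l k))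
      sums (\<Sum>i<m. \<Sum>k<m. (exp (\<psi> (x i)) + cnj (exp (\<psi> (x k))) - exp (\<psi> (qpn_sub p (x i) (x k)))) * l i * cnj (l k))"
    by (intro sums_sum sums_mult2 sums_add sums_diff exp_converges iffD2[OF sums_cnj])
  have e: "(\<Sum>i<m. \<Sum>k<m. ((\<psi> (x i))^j /\<^sub>R fact j + cnj ((\<psi> (x k))^j /\<^sub>R fact j)
        - (\<psi> (qpn_sub p (x i) (x k)))^j /\<^sub>R fact j) * l i * cnj (l k)) = Q j /\<^sub>R fact j" for j
    unfolding Q_def scaleR_sum_right
    by (intro sum.cong refl) (simp add: scaleR_conv_of_real algebra_simps)
  have "0 \<le> Q j /\<^sub>R fact j" for j using Qnn[of j] by (simp add: less_eq_complex_def)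
  thus "0 \<le> (\<Sum>i<m. \<Sum>k<m. (exp (\<psi> (x i)) + cnj (exp (\<psi> (x k))) - exp (\<psi> (qpn_sub p (x i) (x k)))) * l i * cnj (l k))"
    using sums_nonneg_complex[OF s] e by simp
qed



lemma fser_mono:
  fixes c :: "nat \<Rightarrow> real" and \<alpha> :: "nat \<Rightarrow> nat"
  assumes cnn: "\<forall>j\<ge>1. c j \<ge> 0" and summ: "\<forall>y::real. y \<ge> 0 \<longrightarrow> summable (\<lambda>j. c (Suc j) * y ^ \<alpha> (Suc j))"
    and st: "0 \<le> s" "s \<le> t"
  shows "(\<Sum>j. c (Suc j) * s ^ \<alpha> (Suc j)) \<le> (\<Sum>j. c (Suc j) * t ^ \<alpha> (Suc j))"
proof (rule suminf_le)
  fix j show "c (Suc j) * s ^ \<alpha> (Suc j) \<le> c (Suc j) * t ^ \<alpha> (Suc j)"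
    using cnn st by (intro mult_left_mono power_mono) auto
qed (use summ st in auto)

lemma fser_cont:
  fixes c :: "nat \<Rightarrow> real" and \<alpha> :: "nat \<Rightarrow> nat"
  assumes cnn: "\<forall>j\<ge>1. c j \<ge> 0" and summ: "\<forall>y::real. y \<ge> 0 \<longrightarrow> summable (\<lambda>j. c (Suc j) * y ^ \<alpha> (Suc j))"
    and R: "R \<ge> 0"
  shows "continuous_on {0..R} (\<lambda>y. \<Sum>j. c (Suc j) * y ^ \<alpha> (Suc j))"
proof (rule uniform_limit_theorem)
  show "uniform_limit {0..R} (\<lambda>n y. \<Sum>j<n. c (Suc j) * y ^ \<alpha> (Suc j)) (\<lambda>y. \<Sum>j. c (Suc j) * y ^ \<alpha> (Suc j)) sequentially"
  proof (rule Weierstrass_m_test)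
    fix n and y :: real assume "y \<in> {0..R}"
    thus "norm (c (Suc n) * y ^ \<alpha> (Suc n)) \<le> c (Suc n) * R ^ \<alpha> (Suc n)"
      using cnn by (auto simp: abs_mult intro!: mult_left_mono power_mono)
  qed (use summ R in auto)
qed (auto intro!: always_eventually continuous_intros)

lemma exps_mono: "s \<le> t \<Longrightarrow> (exp ^^ k) s \<le> (exp ^^ k) (t::real)"
  by (induction k) auto

lemma exps_pos: "k \<ge> 1 \<Longrightarrow> (exp ^^ k) (s::real) > 0"
  by (cases k) auto

lemma exps_cont: "continuous_on A (exp ^^ k :: real \<Rightarrow> real)"
proof (induction k)
  case 0 thus ?case by (simp add: continuous_on_id)
next
  case (Suc k)
  have "continuous_on A (\<lambda>x. exp ((exp ^^ k) x))"
    by (intro continuous_on_exp Suc)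
  thus ?case by (simp add: o_def)
qed



lemma part2:
  fixes p :: nat and c :: "nat \<Rightarrow> real" and \<alpha> :: "nat \<Rightarrow> nat"
  assumes pr: "prime p" and cnn: "\<forall>j\<ge>1. c j \<ge> 0"
    and summ: "\<forall>y::real. y \<ge> 0 \<longrightarrow> summable (\<lambda>j. c (Suc j) * y ^ \<alpha> (Suc j))"
    and k: "k \<ge> 1"
  defines "g \<equiv> (\<lambda>y. (exp ^^ k) (\<Sum>j. c (Suc j) * y ^ \<alpha> (Suc j)))"
  shows "qpn_continuous p (\<lambda>\<xi> :: 'n::finite \<Rightarrow> qp. complex_of_real (g (qpn_norm p \<xi>)))
       \<and> negdef p (\<lambda>\<xi> :: 'n::finite \<Rightarrow> qp. complex_of_real (g (qpn_norm p \<xi>)))"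
proof
  have gmono: "0 \<le> s \<Longrightarrow> s \<le> t \<Longrightarrow> g s \<le> g t" for s t
    unfolding g_def by (intro exps_mono fser_mono[OF cnn summ])
  have gcont: "R \<ge> 0 \<Longrightarrow> continuous_on {0..R} g" for R
    unfolding g_def
    by (rule continuous_on_compose2[OF exps_cont fser_cont[OF cnn summ]]) auto
  have gpos: "g t > 0" for t unfolding g_def using exps_pos[OF k] by blast
  show "qpn_continuous p (\<lambda>\<xi> :: 'n::finite \<Rightarrow> qp. complex_of_real (g (qpn_norm p \<xi>)))"
    unfolding qpn_continuous_def
  proof (intro ballI allI impI)
    fix x :: "'n \<Rightarrow> qp" and e :: real assume x: "x \<in> Qpn p" and e: "e > 0"
    define R where "R = qpn_norm p x + 1"
    have Nx: "qpn_norm p x \<ge> 0" using N_nonneg[OF pr x] .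
    have "continuous_on {0..R} g" using gcont Nx R_def by simp
    moreover have "qpn_norm p x \<in> {0..R}" using Nx R_def by simp
    ultimately obtain d0 where d0: "d0 > 0" "\<forall>t\<in>{0..R}. dist t (qpn_norm p x) < d0 \<longrightarrow> dist (g t) (g (qpn_norm p x)) < e"
      using e unfolding continuous_on_iff by blast
    show "\<exists>d>0. \<forall>y\<in>Qpn p. qpn_norm p (qpn_sub p y x) < d \<longrightarrow>
        cmod (complex_of_real (g (qpn_norm p y)) - complex_of_real (g (qpn_norm p x))) < e"
    proof (intro exI[of _ "min d0 1"] conjI ballI impI)
      show "min d0 1 > 0" using d0 by simp
      fix y :: "'n \<Rightarrow> qp" assume y: "y \<in> Qpn p" and lt: "qpn_norm p (qpn_sub p y x) < min d0 1"
      have l: "\<bar>qpn_norm p y - qpn_norm p x\<bar> < min d0 1" using N_lip[OF pr x y] lt by linarith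
      have "qpn_norm p y \<in> {0..R}" using l N_nonneg[OF pr y] R_def by auto
      moreover have "dist (qpn_norm p y) (qpn_norm p x) < d0" using l by (simp add: dist_real_def)
      ultimately have "dist (g (qpn_norm p y)) (g (qpn_norm p x)) < e" using d0 by blast
      thus "cmod (complex_of_real (g (qpn_norm p y)) - complex_of_real (g (qpn_norm p x))) < e"
        by (simp add: dist_real_def flip: of_real_diff)
    qed
  qed
  show "negdef p (\<lambda>\<xi> :: 'n::finite \<Rightarrow> qp. complex_of_real (g (qpn_norm p \<xi>)))"
    unfolding negdef_def
  proof (intro allI impI)
    fix m :: nat and x :: "nat \<Rightarrow> ('n \<Rightarrow> qp)" and l :: "nat \<Rightarrow> complex"
    assume m: "1 \<le> m" and x: "\<forall>i<m. x i \<in> Qpn p"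
    define a where "a i = qpn_norm p (x i)" for i
    define d where "d i j = qpn_norm p (qpn_sub p (x i) (x j))" for i j
    define T where "T = insert 0 (a ` {..<m} \<union> (\<lambda>(i,j). d i j) ` ({..<m} \<times> {..<m}))"
    have nonneg: "\<forall>t\<in>T. t \<ge> 0" unfolding T_def a_def d_def
      using N_nonneg[OF pr] N_sub_nonneg[OF pr] x by auto
    have K: "\<forall>h. card (h ` T) \<le> card (g ` T) \<longrightarrow> (\<forall>s\<in>T. \<forall>t\<in>T. s \<le> t \<longrightarrow> h s \<le> h t) \<longrightarrow> h 0 \<ge> 0 \<longrightarrow>
     0 \<le> (\<Sum>i<m. \<Sum>j<m. complex_of_real (h (a i) + h (a j) - h (d i j)) * l i * cnj (l j))"
    proof (rule key[OF T_def nonneg])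
      show "\<forall>i<m. d i i = 0" using x N_self[OF pr] by (auto simp: d_def)
      show "\<forall>i<m. \<forall>j<m. d i j = d j i" using x N_sym[OF pr] by (auto simp: d_def)
      show "\<forall>i<m. \<forall>j<m. \<forall>k<m. d i k \<le> max (d i j) (d j k)" using x N_tri[OF pr] unfolding d_def by blast
      show "\<forall>i<m. \<forall>j<m. d i j \<le> max (a i) (a j)" using x N_sub_le[OF pr] by (auto simp: d_def a_def)
      show "\<forall>i<m. \<forall>j<m. a i \<le> max (d i j) (a j)" using x N_le_sub[OF pr] by (auto simp: d_def a_def)
    qed
    have "0 \<le> (\<Sum>i<m. \<Sum>j<m. complex_of_real (g (a i) + g (a j) - g (d i j)) * l i * cnj (l j))"
      using K gmono nonneg gpos[of 0] by (auto simp: less_imp_le)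
    thus "0 \<le> (\<Sum>i<m. \<Sum>j<m. (complex_of_real (g (qpn_norm p (x i))) + cnj (complex_of_real (g (qpn_norm p (x j))))
              - complex_of_real (g (qpn_norm p (qpn_sub p (x i) (x j))))) * l i * cnj (l j))"
      by (simp add: a_def d_def)
  qed
qed


theorem lemma3p1:
  fixes p :: nat
  assumes "prime p"
  shows "(\<forall>\<psi> :: ('n::finite \<Rightarrow> qp) \<Rightarrow> complex.
           negdef p \<psi> \<and> (\<forall>j::nat. negdef p (\<lambda>\<xi>. (\<psi> \<xi>) ^ j))
           \<longrightarrow> negdef p (\<lambda>\<xi>. exp (\<psi> \<xi>)))
         \<and> (\<forall>(c :: nat \<Rightarrow> real) (\<alpha> :: nat \<Rightarrow> nat).
           (\<forall>j\<ge>1. c j \<ge> 0)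
           \<and> (\<forall>y::real. y \<ge> 0 \<longrightarrow> summable (\<lambda>j. c (Suc j) * y ^ \<alpha> (Suc j)))
           \<and> (\<exists>y1 y2 :: real. y1 \<ge> 0 \<and> y2 \<ge> 0 \<and>
                (\<Sum>j. c (Suc j) * y1 ^ \<alpha> (Suc j)) \<noteq> (\<Sum>j. c (Suc j) * y2 ^ \<alpha> (Suc j)))
           \<longrightarrow> (\<forall>k::nat. k \<ge> 1 \<longrightarrow>
                 (let F = (\<lambda>\<xi> :: 'n \<Rightarrow> qp. complex_of_real
                             ((exp ^^ k) (\<Sum>j. c (Suc j) * qpn_norm p \<xi> ^ \<alpha> (Suc j))))
                  in qpn_continuous p F \<and> negdef p F)))"
proof (intro conjI allI impI)
  fix \<psi> :: "('n::finite \<Rightarrow> qp) \<Rightarrow> complex"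
  assume "negdef p \<psi> \<and> (\<forall>j::nat. negdef p (\<lambda>\<xi>. (\<psi> \<xi>) ^ j))"
  thus "negdef p (\<lambda>\<xi>. exp (\<psi> \<xi>))" using part1 by blast
next
  fix c :: "nat \<Rightarrow> real" and \<alpha> :: "nat \<Rightarrow> nat" and k :: nat
  assume H: "(\<forall>j\<ge>1. c j \<ge> 0)
           \<and> (\<forall>y::real. y \<ge> 0 \<longrightarrow> summable (\<lambda>j. c (Suc j) * y ^ \<alpha> (Suc j)))
           \<and> (\<exists>y1 y2 :: real. y1 \<ge> 0 \<and> y2 \<ge> 0 \<and>
                (\<Sum>j. c (Suc j) * y1 ^ \<alpha> (Suc j)) \<noteq> (\<Sum>j. c (Suc j) * y2 ^ \<alpha> (Suc j)))"
    and k: "k \<ge> 1"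
  have "qpn_continuous p (\<lambda>\<xi> :: 'n \<Rightarrow> qp. complex_of_real ((exp ^^ k) (\<Sum>j. c (Suc j) * qpn_norm p \<xi> ^ \<alpha> (Suc j))))
       \<and> negdef p (\<lambda>\<xi> :: 'n \<Rightarrow> qp. complex_of_real ((exp ^^ k) (\<Sum>j. c (Suc j) * qpn_norm p \<xi> ^ \<alpha> (Suc j))))"
    using part2[OF assms _ _ k, of c \<alpha>] H by simp
  thus "let F = (\<lambda>\<xi> :: 'n \<Rightarrow> qp. complex_of_real
                             ((exp ^^ k) (\<Sum>j. c (Suc j) * qpn_norm p \<xi> ^ \<alpha> (Suc j))))
                  in qpn_continuous p F \<and> negdef p F" by (simp add: Let_def)
qed

end
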